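(* Let $\mathcal{C}$ be a binary cyclic code of length $n$ whose generator polynomial $g\in\mathbb{F}_2[X]$, $g\mid X^n-1$, of degree $r$, is a product of distinct irreducible polynomials. Then the burst-covering radius $b$ of $\mathcal{C}$ satisfies \[ b=\max_{f\in\mathcal{F}_r}\Bigl(\min_{k\ge0}\deg\bigl(X^kf \bmod g\bigr)+1\Bigr), \] where $\mathcal{F}_r=\{f\in\mathbb{F}_2[X]:\deg f<r\}$.
   Context: The burst-covering radius of a code $\mathcal{C}\subseteq\mathbb{F}_2^n$ is the least $b$ such that for every $y\in\mathbb{F}_2^n$ there is $c\in\mathcal{C}$ with $\operatorname{supp}(y-c)\subseteq\{i,i+1,\dots,i+b-1\}$ (indices modulo $n$) for some $i$; equivalently, for linear codes, the least $b$ such that every syndrome is a linear combination of $b$ cyclically consecutive columns of a parity-check matrix. Convention: $\deg(0)=-\infty$. *)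

theory Defs
  imports "HOL-Computational_Algebra.Polynomial" "HOL-Library.Z2" "HOL-Library.Extended_Real"
begin

text \<open>Binary words of length n are identified with polynomials over GF(2) = bit of degree < n
  (coefficient j is the j-th coordinate, j = 0..n-1).\<close>

definition words :: "nat \<Rightarrow> bit poly set" where
  "words n = {p. degree p < n}"

definition cyclic_code :: "nat \<Rightarrow> bit poly \<Rightarrow> bit poly set" where
  "cyclic_code n g = {c. degree c < n \<and> g dvd c}"

definition cyclic_burst :: "nat \<Rightarrow> nat \<Rightarrow> bit poly \<Rightarrow> bool" where
  "cyclic_burst n b e \<longleftrightarrow> (\<exists>i<n. \<forall>j. coeff e j \<noteq> 0 \<longrightarrow> (\<exists>t<b. j = (i + t) mod n))"

definition burst_covering_radius :: "nat \<Rightarrow> bit poly set \<Rightarrow> nat" where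
  "burst_covering_radius n C =
     (LEAST b. \<forall>y\<in>words n. \<exists>c\<in>C. cyclic_burst n b (y - c))"

definition deg_ninf :: "'a::zero poly \<Rightarrow> ereal" where
  "deg_ninf p = (if p = 0 then -\<infinity> else ereal (real (degree p)))"

definition prod_distinct_irreducibles :: "bit poly \<Rightarrow> bool" where
  "prod_distinct_irreducibles g \<longleftrightarrow>
     (\<exists>P. finite P \<and> (\<forall>p\<in>P. irreducible p) \<and> g = \<Prod>P)"

end

theory Submission
  imports Defs
begin

lemma pow_minus_one_dvd:
  fixes x :: "'a::comm_ring_1"
  shows "(x - 1) dvd (x ^ q - 1)"
proof (induction q)
  case 0 then show ?case by simp
next
  case (Suc q)
  have "x ^ Suc q - 1 = x * (x ^ q - 1) + (x - 1)" by (simp add: algebra_simps)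
  then show ?case using Suc by (metis dvd_add dvd_mult dvd_refl)
qed

lemma monom_mod_dvd:
  fixes c :: "'a::comm_ring_1"
  shows "(monom 1 n - 1) dvd (monom c a - monom c (a mod n))"
proof -
  have "monom c a = monom c (a mod n) * (monom 1 n) ^ (a div n)"
    by (simp add: monom_power mult_monom mult.commute)
  then have "monom c a - monom c (a mod n) = monom c (a mod n) * ((monom 1 n) ^ (a div n) - 1)"
    by (simp add: algebra_simps)
  then show ?thesis using pow_minus_one_dvd by (metis dvd_mult)
qed

lemma monom_cong_dvd:
  fixes c :: "'a::comm_ring_1"
  assumes "a mod n = b mod n"
  shows "(monom 1 n - 1) dvd (monom c a - monom c b)"
proof -
  have "monom c a - monom c b = (monom c a - monom c (a mod n)) - (monom c b - monom c (b mod n))"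
    using assms by simp
  then show ?thesis using monom_mod_dvd by (metis dvd_diff)
qed

lemma poly_sum_lessThan:
  assumes "degree p < N"
  shows "(\<Sum>i<N. monom (coeff p i) i) = p"
proof -
  have "{..<N} = {..N-1}" using assms by auto
  then show ?thesis using poly_as_sum_of_monoms'[of p "N-1"] assms by simp
qed

lemma shift_dvd:
  fixes p :: "'a::comm_ring_1 poly"
  assumes "degree p < N" and "\<And>j. h j mod n = (k + j) mod n"
  shows "(monom 1 n - 1) dvd (monom 1 k * p - (\<Sum>j<N. monom (coeff p j) (h j)))"
proof -
  have "monom 1 k * p = monom 1 k * (\<Sum>j<N. monom (coeff p j) j)"
    using poly_sum_lessThan[OF assms(1)] by simp
  also have "\<dots> = (\<Sum>j<N. monom (coeff p j) (k + j))"
    by (simp add: sum_distrib_left mult_monom)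
  finally have "monom 1 k * p = (\<Sum>j<N. monom (coeff p j) (k + j))" .
  then have "monom 1 k * p - (\<Sum>j<N. monom (coeff p j) (h j))
      = (\<Sum>j<N. monom (coeff p j) (k + j) - monom (coeff p j) (h j))"
    by (simp add: sum_subtractf)
  also have "(monom 1 n - 1) dvd \<dots>"
    by (rule dvd_sum) (rule monom_cong_dvd, simp add: assms(2))
  finally show ?thesis .
qed

lemma coeff_sum_monom_nz:
  assumes "coeff (\<Sum>j\<in>A. monom (c j) (h j)) m \<noteq> 0"
  shows "\<exists>j\<in>A. c j \<noteq> 0 \<and> h j = m"
proof (rule ccontr)
  assume "\<not> ?thesis"
  then have "\<forall>j\<in>A. (if h j = m then c j else 0) = 0" by auto
  then have "(\<Sum>j\<in>A. (if h j = m then c j else 0)) = 0" by simp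
  then show False using assms by (simp add: coeff_sum coeff_monom)
qed

lemma cover_from_P:
  fixes g y :: "bit poly"
  assumes n: "0 < n" and gd: "g dvd (monom 1 n - 1)" and y: "degree y < n"
    and k: "deg_ninf (monom 1 k * (y mod g) mod g) < ereal (real b)"
  shows "\<exists>c\<in>cyclic_code n g. cyclic_burst n b (y - c)"
proof -
  define z where "z = monom 1 k * (y mod g) mod g"
  have zb: "t < b" if "coeff z t \<noteq> 0" for t
  proof -
    have "z \<noteq> 0" using that by auto
    then have "degree z < b" using k by (simp add: z_def deg_ninf_def)
    moreover have "t \<le> degree z" using that by (simp add: le_degree)
    ultimately show ?thesis by simp
  qed
  define i where "i = (n - k mod n) mod n"
  have i: "i < n" using n by (simp add: i_def)
  have ik: "(i + k) mod n = 0 mod n"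
  proof -
    have "(i + k) mod n = (i + k mod n) mod n" by (simp add: mod_add_right_eq)
    also have "\<dots> = ((n - k mod n) + k mod n) mod n" by (simp add: i_def mod_add_left_eq)
    also have "\<dots> = n mod n" using n by (simp add: le_add_diff_inverse2 less_imp_le)
    finally show ?thesis by simp
  qed
  define e where "e = (\<Sum>t<Suc (degree z). monom (coeff z t) ((i + t) mod n))"
  have d1: "(monom 1 n - 1) dvd (monom 1 i * z - e)"
    using shift_dvd[of z "Suc (degree z)" "\<lambda>t. (i + t) mod n" n i] by (simp add: e_def)
  have d2: "(monom 1 n - 1) dvd (monom 1 (i + k) * y - y)"
  proof -
    have "(monom 1 n - 1) dvd (monom (1::bit) (i + k) - monom 1 0)"
      by (rule monom_cong_dvd) (rule ik)
    then have "(monom 1 n - 1) dvd ((monom (1::bit) (i + k) - 1) * y)"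
      by (simp add: one_pCons dvd_mult2)
    then show ?thesis by (simp add: algebra_simps)
  qed
  have d3: "g dvd (monom 1 i * z - monom 1 (i + k) * y)"
  proof -
    have "monom 1 i * z mod g = monom 1 i * (monom 1 k * (y mod g)) mod g"
      unfolding z_def by (rule mod_mult_right_eq)
    also have "\<dots> = monom 1 (i + k) * (y mod g) mod g"
      by (simp add: mult.assoc[symmetric] mult_monom)
    also have "\<dots> = monom 1 (i + k) * y mod g" by (simp add: mod_mult_right_eq)
    finally show ?thesis by (simp add: mod_eq_dvd_iff)
  qed
  have "y - e = (monom 1 i * z - e) - (monom 1 i * z - monom 1 (i + k) * y) - (monom 1 (i + k) * y - y)"
    by (simp add: algebra_simps)
  moreover have "g dvd (monom 1 i * z - e)" using d1 gd dvd_trans by blast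
  moreover have "g dvd (monom 1 (i + k) * y - y)" using d2 gd dvd_trans by blast
  ultimately have gye: "g dvd (y - e)" using d3 by (metis dvd_diff)
  have ce: "\<exists>t<b. m = (i + t) mod n" if "coeff e m \<noteq> 0" for m
  proof -
    have "\<exists>t\<in>{..<Suc (degree z)}. coeff z t \<noteq> 0 \<and> (i + t) mod n = m"
      using that unfolding e_def by (rule coeff_sum_monom_nz)
    then obtain t where "t \<in> {..<Suc (degree z)}" "coeff z t \<noteq> 0" "(i + t) mod n = m"
      by blast
    then show ?thesis using zb by blast
  qed
  have de: "degree e < n"
  proof (cases "e = 0")
    case True then show ?thesis using n by simp
  next
    case False
    then have "coeff e (degree e) \<noteq> 0" by simp
    then obtain t where "degree e = (i + t) mod n" using ce by blast
    then show ?thesis using n by simp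
  qed
  have "y - e \<in> cyclic_code n g"
    unfolding cyclic_code_def using gye y de degree_diff_le_max[of y e] by auto
  moreover have "cyclic_burst n b (y - (y - e))"
    unfolding cyclic_burst_def using i ce by auto
  ultimately show ?thesis by blast
qed

lemma Xn1_nz:
  assumes n: "0 < n"
  shows "monom (1::bit) n - 1 \<noteq> 0"
proof
  assume "monom (1::bit) n - 1 = 0"
  then have "coeff (monom (1::bit) n) n = coeff 1 n" by (metis eq_iff_diff_eq_0)
  then show False using n by simp
qed

lemma P_from_cover:
  fixes g f :: "bit poly"
  assumes n: "0 < n" and gd: "g dvd (monom 1 n - 1)" and f: "degree f < n"
    and cov: "\<exists>c\<in>cyclic_code n g. cyclic_burst n b (f - c)"
  shows "\<exists>k. deg_ninf (monom 1 k * f mod g) < ereal (real b)"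
proof -
  obtain c i where c: "degree c < n" "g dvd c" and i: "i < n"
    and supp: "\<And>j. coeff (f - c) j \<noteq> 0 \<Longrightarrow> (\<exists>t<b. j = (i + t) mod n)"
    using cov unfolding cyclic_code_def cyclic_burst_def by blast
  define e where "e = f - c"
  have de: "degree e < n" using c f degree_diff_le_max[of f c] by (simp add: e_def)
  define k where "k = n - i"
  define w where "w = (\<Sum>j<n. monom (coeff e j) ((k + j) mod n))"
  have "(monom 1 n - 1) dvd (monom 1 k * e - w)"
    using shift_dvd[of e n "\<lambda>j. (k + j) mod n" n k] de by (simp add: w_def)
  then have "g dvd (monom 1 k * e - w)" using gd dvd_trans by blast
  moreover have "monom 1 k * f - w = (monom 1 k * e - w) + monom 1 k * c"
    by (simp add: e_def algebra_simps)
  ultimately have "g dvd (monom 1 k * f - w)" using c(2) by (metis dvd_add dvd_mult)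
  then have eq: "monom 1 k * f mod g = w mod g" by (simp add: mod_eq_dvd_iff)
  have wb: "m < b" if "coeff w m \<noteq> 0" for m
  proof -
    have "\<exists>j\<in>{..<n}. coeff e j \<noteq> 0 \<and> (k + j) mod n = m"
      using that unfolding w_def by (rule coeff_sum_monom_nz)
    then obtain j where j: "coeff e j \<noteq> 0" "(k + j) mod n = m" by blast
    then obtain t where t: "t < b" "j = (i + t) mod n" using supp e_def by blast
    have "m = (k + (i + t) mod n) mod n" using j t by simp
    also have "\<dots> = (k + (i + t)) mod n" by (simp add: mod_add_right_eq)
    also have "k + (i + t) = n + t" using i by (simp add: k_def)
    also have "(n + t) mod n = t mod n" by simp
    also have "\<dots> \<le> t" by simp
    finally show ?thesis using t by simp
  qed
  have g0: "g \<noteq> 0" using gd Xn1_nz[OF n] by auto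
  have "deg_ninf (w mod g) < ereal (real b)"
  proof (cases "w mod g = 0")
    case True then show ?thesis by (simp add: deg_ninf_def)
  next
    case False
    then have w0: "w \<noteq> 0" by auto
    then have "degree w < b" using wb[of "degree w"] leading_coeff_neq_0[of w] by blast
    moreover have "degree (w mod g) \<le> degree w"
    proof (cases "degree w < degree g")
      case True then show ?thesis by (simp add: mod_poly_less)
    next
      case False2: False
      then show ?thesis using degree_mod_less'[OF g0 False] by simp
    qed
    ultimately show ?thesis using False by (simp add: deg_ninf_def)
  qed
  then show ?thesis using eq by metis
qed

lemma deg_ninf_lt_iff:
  fixes f :: "bit poly"
  assumes "0 < r"
  shows "deg_ninf f < ereal (real r) \<longleftrightarrow> degree f < r"
  using assms by (auto simp: deg_ninf_def)

theorem corollary2: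
  fixes n r :: nat and g :: "bit poly"
  assumes "0 < n"
    and "g dvd (monom 1 n - 1)"
    and "degree g = r"
    and "0 < r"
    and "prod_distinct_irreducibles g"
  shows "ereal (real (burst_covering_radius n (cyclic_code n g))) =
    (SUP f\<in>{f :: bit poly. deg_ninf f < ereal (real r)}.
       (INF k::nat. deg_ninf (monom 1 k * f mod g)) + 1)"
proof -
  note n = assms(1) and gd = assms(2) and dg = assms(3) and r0 = assms(4)
  define P where "P b \<longleftrightarrow> (\<forall>f::bit poly. degree f < r \<longrightarrow>
      (\<exists>k. deg_ninf (monom 1 k * f mod g) < ereal (real b)))" for b :: nat
  have g0: "g \<noteq> 0" using gd Xn1_nz[OF n] by auto
  have "degree (monom (1::bit) n - 1) \<le> n"
    using degree_diff_le_max[of "monom (1::bit) n" 1] using degree_monom_le[of "1::bit" n] by simp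
  then have rn: "r \<le> n" using dvd_imp_degree_le[OF gd Xn1_nz[OF n]] dg by simp
  have modlt: "degree (y mod g) < r" for y
    using degree_mod_less[OF g0, of y] dg r0 by auto
  have cov_iff: "(\<forall>y\<in>words n. \<exists>c\<in>cyclic_code n g. cyclic_burst n b (y - c)) \<longleftrightarrow> P b" for b
  proof
    assume H: "\<forall>y\<in>words n. \<exists>c\<in>cyclic_code n g. cyclic_burst n b (y - c)"
    show "P b" unfolding P_def
    proof (intro allI impI)
      fix f :: "bit poly" assume "degree f < r"
      then have "degree f < n" using rn by simp
      then show "\<exists>k. deg_ninf (monom 1 k * f mod g) < ereal (real b)"
        using P_from_cover[OF n gd] H by (simp add: words_def)
    qed
  next
    assume H: "P b"
    show "\<forall>y\<in>words n. \<exists>c\<in>cyclic_code n g. cyclic_burst n b (y - c)"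
    proof
      fix y assume "y \<in> words n"
      then have y: "degree y < n" by (simp add: words_def)
      obtain k where "deg_ninf (monom 1 k * (y mod g) mod g) < ereal (real b)"
        using H modlt unfolding P_def by blast
      then show "\<exists>c\<in>cyclic_code n g. cyclic_burst n b (y - c)"
        by (rule cover_from_P[OF n gd y])
    qed
  qed
  have Bdef: "burst_covering_radius n (cyclic_code n g) = (LEAST b. P b)"
    unfolding burst_covering_radius_def using cov_iff by simp
  have Pr: "P r"
    unfolding P_def
  proof (intro allI impI)
    fix f :: "bit poly"
    show "\<exists>k. deg_ninf (monom 1 k * f mod g) < ereal (real r)"
      using modlt[of f] r0 by (intro exI[of _ 0]) (simp add: deg_ninf_lt_iff)
  qed
  have notP0: "\<not> P 0"
  proof
    assume "P 0"
    then have "\<exists>k. deg_ninf (monom 1 k * 1 mod g) < ereal (real 0)"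
      using r0 unfolding P_def by (metis degree_1)
    then obtain k where "deg_ninf (monom 1 k * 1 mod g) < ereal 0" by auto
    then have "monom 1 k mod g = 0" by (auto simp: deg_ninf_def split: if_splits)
    then have gk: "g dvd monom 1 k" by (simp add: mod_eq_0_iff_dvd)
    have "monom (1::bit) (k * n) = monom 1 k * monom 1 (k * n - k)"
      using n by (simp add: mult_monom)
    then have gkn: "g dvd monom 1 (k * n)" using gk by simp
    have "(monom 1 n - 1) dvd (monom (1::bit) (k * n) - monom 1 0)"
      by (rule monom_cong_dvd) simp
    then have "(monom 1 n - 1) dvd (monom (1::bit) (k * n) - 1)" by (simp add: one_pCons)
    then have "g dvd (monom (1::bit) (k * n) - 1)" using gd dvd_trans by blast
    moreover have "(1::bit poly) = monom 1 (k * n) - (monom 1 (k * n) - 1)" by simp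
    ultimately have "g dvd 1" using gkn by (metis dvd_diff)
    then have "degree g = 0" using dvd_imp_degree_le[of g 1] by simp
    then show False using dg r0 by simp
  qed
  define B where "B = (LEAST b. P b)"
  have PB: "P B" unfolding B_def by (rule LeastI[of P r]) (rule Pr)
  have B0: "B \<noteq> 0"
  proof
    assume "B = 0"
    with PB notP0 show False by simp
  qed
  have nPB: "\<not> P (B - 1)"
  proof
    assume "P (B - 1)"
    then have "B \<le> B - 1" unfolding B_def by (rule Least_le)
    then show False using B0 by simp
  qed
  show ?thesis unfolding Bdef B_def[symmetric]
  proof (rule antisym)
    obtain f :: "bit poly" where f: "degree f < r"
      and fk: "\<And>k. \<not> deg_ninf (monom 1 k * f mod g) < ereal (real (B - 1))"
      using nPB unfolding P_def by blast
    have "ereal (real (B - 1)) \<le> (INF k::nat. deg_ninf (monom 1 k * f mod g))"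
      by (rule INF_greatest) (use fk in \<open>simp add: not_less\<close>)
    then have "ereal (real (B - 1)) + 1 \<le> (INF k::nat. deg_ninf (monom 1 k * f mod g)) + 1"
      by (rule add_right_mono)
    moreover have "ereal (real (B - 1)) + 1 = ereal (real B)" using B0 by simp
    moreover have "f \<in> {f :: bit poly. deg_ninf f < ereal (real r)}"
      using f r0 by (simp add: deg_ninf_lt_iff)
    moreover have "(INF k::nat. deg_ninf (monom 1 k * f mod g)) + 1 \<le> (SUP f\<in>{f :: bit poly. deg_ninf f < ereal (real r)}.
       (INF k::nat. deg_ninf (monom 1 k * f mod g)) + 1)"
      by (rule SUP_upper) fact
    ultimately show "ereal (real B) \<le> (SUP f\<in>{f :: bit poly. deg_ninf f < ereal (real r)}.
       (INF k::nat. deg_ninf (monom 1 k * f mod g)) + 1)"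
      by simp
  next
    show "(SUP f\<in>{f :: bit poly. deg_ninf f < ereal (real r)}.
       (INF k::nat. deg_ninf (monom 1 k * f mod g)) + 1) \<le> ereal (real B)"
    proof (rule SUP_least)
      fix f :: "bit poly" assume "f \<in> {f. deg_ninf f < ereal (real r)}"
      then have "degree f < r" using r0 by (simp add: deg_ninf_lt_iff)
      then obtain k where k: "deg_ninf (monom 1 k * f mod g) < ereal (real B)"
        using PB unfolding P_def by blast
      define D where "D = deg_ninf (monom 1 k * f mod g)"
      have "(INF k::nat. deg_ninf (monom 1 k * f mod g)) \<le> D"
        unfolding D_def by (rule INF_lower) simp
      then have "(INF k::nat. deg_ninf (monom 1 k * f mod g)) + 1 \<le> D + 1"
        by (rule add_right_mono)
      also have "D + 1 \<le> ereal (real B)"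
        using k unfolding D_def by (auto simp: deg_ninf_def split: if_splits)
      finally show "(INF k::nat. deg_ninf (monom 1 k * f mod g)) + 1 \<le> ereal (real B)" .
    qed
  qed
qed

end
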